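(* For every sequence of digits in $D$ and every $n\ge1$: (1) $p_n/q_n$ lies between $p_n'/q_n'$ and $p_n''/q_n''$; (2) $p_{n-1}/q_{n-1}$ does not lie between $p_n'/q_n'$ and $p_n''/q_n''$; (3) the three numbers $p_n/q_n$, $p_n'/q_n'$, $p_n''/q_n''$ are distinct and all lie in the half-open interval $I_{n-1}$ with endpoints $p_{n-1}/q_{n-1}$ and $p_{n-1}''/q_{n-1}''$ that contains $p_{n-1}''/q_{n-1}''$ but not $p_{n-1}/q_{n-1}$.
   Context: Admissible digits: $D=\{(1,1)\}\cup\{(a,\varepsilon): a\in\mathbb Z,\ a\ge2,\ \varepsilon\in\{-1,1\}\}$. Fix digits $(a_1,\varepsilon_1),(a_2,\varepsilon_2),\dots\in D$. For $n\ge1$, with $M=\begin{pmatrix}1&-1\\1&0\end{pmatrix}$, $J=\begin{pmatrix}2&-1\\1&0\end{pmatrix}$, $E(a,\varepsilon)=\begin{pmatrix}a&\varepsilon\\1&0\end{pmatrix}$, define integers by $M E(a_1,\varepsilon_1) J\cdots J E(a_n,\varepsilon_n) J=\begin{pmatrix}p_n&-p_n'\\ q_n&-q_n'\end{pmatrix}$ and $\begin{pmatrix}p_n''\\ q_n''\end{pmatrix}=M E(a_1,\varepsilon_1) J\cdots J E(a_n,\varepsilon_n)\begin{pmatrix}1\\1\end{pmatrix}$; set $p_0=q_0=1$, $p_0''=0$, $q_0''=1$. Then $p_n/q_n$, $p_n'/q_n'$, $p_n''/q_n''$ equal the finite continued fraction $1-\cfrac{1}{a_1+\cfrac{\varepsilon_1}{2-\cfrac{1}{\ddots\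 \cfrac{\varepsilon_{n-1}}{2-\cfrac{1}{c}}}}}$ with last term $c=a_n+\varepsilon_n/2$, $c=a_n$, $c=a_n+\varepsilon_n$ respectively (principal, sub-, pseudo-convergents); all $q$'s are positive. *)

theory Defs
  imports Complex_Main
begin

text \<open>2x2 integer matrices (m11, m12, m21, m22).\<close>
type_synonym mat2 = "int \<times> int \<times> int \<times> int"

fun mmul :: "mat2 \<Rightarrow> mat2 \<Rightarrow> mat2" where
  "mmul (a,b,c,d) (e,f,g,h) = (a*e + b*g, a*f + b*h, c*e + d*g, c*f + d*h)"

definition Mmat :: mat2 where "Mmat = (1, -1, 1, 0)"
definition Jmat :: mat2 where "Jmat = (2, -1, 1, 0)"
definition Emat :: "int \<Rightarrow> int \<Rightarrow> mat2" where "Emat a e = (a, e, 1, 0)"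

definition admissible :: "int \<times> int \<Rightarrow> bool" where
  "admissible d \<longleftrightarrow> d = (1,1) \<or> (fst d \<ge> 2 \<and> (snd d = -1 \<or> snd d = 1))"

text \<open>Digit sequences are indexed from 1: digit k is (a k, e k), k \<ge> 1.
  prodM a e n = M E(a1,e1) J ... J E(an,en) J  (prodM a e 0 = M).\<close>
fun prodM :: "(nat \<Rightarrow> int) \<Rightarrow> (nat \<Rightarrow> int) \<Rightarrow> nat \<Rightarrow> mat2" where
  "prodM a e 0 = Mmat"
| "prodM a e (Suc n) = mmul (mmul (prodM a e n) (Emat (a (Suc n)) (e (Suc n)))) Jmat"

definition pp :: "(nat \<Rightarrow> int) \<Rightarrow> (nat \<Rightarrow> int) \<Rightarrow> nat \<Rightarrow> int" where
  "pp a e n = (if n = 0 then 1 else (case prodM a e n of (m11,m12,m21,m22) \<Rightarrow> m11))"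
definition qq :: "(nat \<Rightarrow> int) \<Rightarrow> (nat \<Rightarrow> int) \<Rightarrow> nat \<Rightarrow> int" where
  "qq a e n = (if n = 0 then 1 else (case prodM a e n of (m11,m12,m21,m22) \<Rightarrow> m21))"
text \<open>sub-convergents (defined for n \<ge> 1)\<close>
definition pp' :: "(nat \<Rightarrow> int) \<Rightarrow> (nat \<Rightarrow> int) \<Rightarrow> nat \<Rightarrow> int" where
  "pp' a e n = (case prodM a e n of (m11,m12,m21,m22) \<Rightarrow> - m12)"
definition qq' :: "(nat \<Rightarrow> int) \<Rightarrow> (nat \<Rightarrow> int) \<Rightarrow> nat \<Rightarrow> int" where
  "qq' a e n = (case prodM a e n of (m11,m12,m21,m22) \<Rightarrow> - m22)"
text \<open>pseudo-convergents: M E1 J ... J En (1,1)^T for n \<ge> 1; p''_0 = 0, q''_0 = 1\<close>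
definition pp'' :: "(nat \<Rightarrow> int) \<Rightarrow> (nat \<Rightarrow> int) \<Rightarrow> nat \<Rightarrow> int" where
  "pp'' a e n = (if n = 0 then 0 else
     (case mmul (prodM a e (n-1)) (Emat (a n) (e n)) of (m11,m12,m21,m22) \<Rightarrow> m11 + m12))"
definition qq'' :: "(nat \<Rightarrow> int) \<Rightarrow> (nat \<Rightarrow> int) \<Rightarrow> nat \<Rightarrow> int" where
  "qq'' a e n = (if n = 0 then 1 else
     (case mmul (prodM a e (n-1)) (Emat (a n) (e n)) of (m11,m12,m21,m22) \<Rightarrow> m21 + m22))"

definition between :: "real \<Rightarrow> real \<Rightarrow> real \<Rightarrow> bool" where
  "between x u v \<longleftrightarrow> min u v \<le> x \<and> x \<le> max u v"

definition halfopen :: "real \<Rightarrow> real \<Rightarrow> real set" where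
  "halfopen u v = {x. (u < v \<and> u < x \<and> x \<le> v) \<or> (v < u \<and> v \<le> x \<and> x < u)}"

end

theory Submission
  imports Defs
begin

lemma ord:
  fixes u v w s x :: real
  assumes "(u < v \<and> v < w) \<or> (w < v \<and> v < u)"
    and "(x \<le> u \<and> x \<le> w \<and> u < s \<and> w < s \<and> v < s \<and> x < s) \<or> (x \<ge> u \<and> x \<ge> w \<and> u > s \<and> w > s \<and> v > s \<and> x > s)"
  shows "between v u w \<and> \<not> between s u w \<and> v \<noteq> u \<and> v \<noteq> w \<and> u \<noteq> w
    \<and> v \<in> halfopen s x \<and> u \<in> halfopen s x \<and> w \<in> halfopen s x"
  using assms unfolding between_def halfopen_def by (auto simp: min_def max_def)

lemma mob:
  fixes X11 X12 X21 X22 A E :: real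
  assumes h1: "X21 > 0" and h2: "X21 + X22 > 0" and hd: "X11*X22 - X12*X21 \<noteq> 0"
    and dig: "(A = 1 \<and> E = 1) \<or> (A \<ge> 2 \<and> (E = 1 \<or> E = -1))"
  shows "between (((2*A+E)*X11 + 2*X12)/((2*A+E)*X21+2*X22)) ((A*X11 + X12)/(A*X21 + X22)) (((A+E)*X11+X12)/((A+E)*X21+X22))
    \<and> \<not> between (X11/X21) ((A*X11 + X12)/(A*X21 + X22)) (((A+E)*X11+X12)/((A+E)*X21+X22))
    \<and> ((2*A+E)*X11 + 2*X12)/((2*A+E)*X21+2*X22) \<noteq> (A*X11 + X12)/(A*X21 + X22)
    \<and> ((2*A+E)*X11 + 2*X12)/((2*A+E)*X21+2*X22) \<noteq> ((A+E)*X11+X12)/((A+E)*X21+X22)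
    \<and> (A*X11 + X12)/(A*X21 + X22) \<noteq> ((A+E)*X11+X12)/((A+E)*X21+X22)
    \<and> ((2*A+E)*X11 + 2*X12)/((2*A+E)*X21+2*X22) \<in> halfopen (X11/X21) ((X11+X12)/(X21+X22))
    \<and> (A*X11 + X12)/(A*X21 + X22) \<in> halfopen (X11/X21) ((X11+X12)/(X21+X22))
    \<and> ((A+E)*X11+X12)/((A+E)*X21+X22) \<in> halfopen (X11/X21) ((X11+X12)/(X21+X22))"
proof -
  define d where "d = X11*X22 - X12*X21"
  define f where "f t = (t*X11 + X12)/(t*X21 + X22)" for t
  have den: "t*X21 + X22 > 0" if "t \<ge> 1" for t
  proof -
    have "(t-1)*X21 \<ge> 0" using that h1 by simp
    thus ?thesis using h2 by (simp add: algebra_simps)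
  qed
  have diff: "f t1 - f t2 = (t1-t2)*d/((t1*X21+X22)*(t2*X21+X22))" if "t1 \<ge> 1" "t2 \<ge> 1" for t1 t2
    using den[OF that(1)] den[OF that(2)] unfolding f_def d_def
    by (simp add: field_simps)
  have diffs: "f t - X11/X21 = - d/((t*X21+X22)*X21)" if "t \<ge> 1" for t
    using den[OF that] h1 unfolding f_def d_def
    by (simp add: field_simps)
  have lt: "(f t1 < f t2) \<longleftrightarrow> (if d > 0 then t1 < t2 else t2 < t1)" if "t1 \<ge> 1" "t2 \<ge> 1" for t1 t2
  proof -
    have p: "(t1*X21+X22)*(t2*X21+X22) > 0" using den[OF that(1)] den[OF that(2)] by simp
    have "f t1 < f t2 \<longleftrightarrow> (t1-t2)*d/((t1*X21+X22)*(t2*X21+X22)) < 0" using diff[OF that] by linarith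
    also have "\<dots> \<longleftrightarrow> (t1-t2)*d < 0" using p by (simp add: divide_less_0_iff)
    also have "\<dots> \<longleftrightarrow> (if d > 0 then t1 < t2 else t2 < t1)" using hd unfolding d_def[symmetric]
      by (auto simp: mult_less_0_iff)
    finally show ?thesis .
  qed
  have ls: "(f t < X11/X21) \<longleftrightarrow> d > 0" if "t \<ge> 1" for t
  proof -
    have p: "(t*X21+X22)*X21 > 0" using den[OF that] h1 by simp
    have "f t < X11/X21 \<longleftrightarrow> - d/((t*X21+X22)*X21) < 0" using diffs[OF that] by linarith
    also have "\<dots> \<longleftrightarrow> d > 0" using p by (simp add: zero_less_divide_iff)
    finally show ?thesis .
  qed
  have r: "((2*A+E)*X11 + 2*X12)/((2*A+E)*X21+2*X22) = f (A + E/2)"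
  proof -
    have "(A + E/2)*X11 + X12 = ((2*A+E)*X11 + 2*X12)/2" "(A + E/2)*X21 + X22 = ((2*A+E)*X21 + 2*X22)/2"
      by (simp_all add: field_simps)
    moreover have "(A + E/2)*X21 + X22 > 0" using den[of "A+E/2"] dig by auto
    ultimately show ?thesis unfolding f_def by (simp add: field_simps)
  qed
  have r': "(A*X11 + X12)/(A*X21 + X22) = f A" unfolding f_def by simp
  have r'': "((A+E)*X11+X12)/((A+E)*X21+X22) = f (A+E)" unfolding f_def by simp
  have s'': "(X11+X12)/(X21+X22) = f 1" unfolding f_def by simp
  have g1: "A \<ge> 1" "A + E \<ge> 1" "A + E/2 \<ge> 1" using dig by auto
  have nd: "d \<noteq> 0" using hd d_def by simp
  have E: "E = 1 \<or> E = -1" using dig by auto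
  have O: "(f A < f (A+E/2) \<and> f (A+E/2) < f (A+E)) \<or> (f (A+E) < f (A+E/2) \<and> f (A+E/2) < f A)"
    using E lt[OF g1(1) g1(3)] lt[OF g1(3) g1(2)] lt[OF g1(2) g1(3)] lt[OF g1(3) g1(1)] by auto
  have O2: "(f 1 \<le> f A \<and> f 1 \<le> f (A+E) \<and> f A < X11/X21 \<and> f (A+E) < X11/X21 \<and> f (A+E/2) < X11/X21 \<and> f 1 < X11/X21)
     \<or> (f 1 \<ge> f A \<and> f 1 \<ge> f (A+E) \<and> f A > X11/X21 \<and> f (A+E) > X11/X21 \<and> f (A+E/2) > X11/X21 \<and> f 1 > X11/X21)"
  proof (cases "d > 0")
    case True
    then show ?thesis using g1 lt[OF g1(1) order_refl] lt[OF g1(2) order_refl] ls[OF g1(1)] ls[OF g1(2)] ls[OF g1(3)] ls[OF order_refl]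
      by (auto simp: not_less)
  next
    case False
    have "f t \<noteq> X11/X21" if "t \<ge> 1" for t using diffs[OF that] nd den[OF that] h1 by auto
    have gt: "f t > X11/X21" if "t \<ge> 1" for t
      using \<open>\<And>t. t\<ge>1 \<Longrightarrow> f t \<noteq> X11/X21\<close>[OF that] ls[OF that] False by linarith
    have m1: "f 1 \<ge> f A" using lt[OF order_refl g1(1)] False g1 by (auto simp: not_less)
    have m2: "f 1 \<ge> f (A+E)" using lt[OF order_refl g1(2)] False g1 by (auto simp: not_less)
    show ?thesis using m1 m2 gt[OF g1(1)] gt[OF g1(2)] gt[OF g1(3)] gt[OF order_refl] by blast
  qed
  show ?thesis unfolding r r' r'' s'' using ord[OF O O2] .
qed

lemma inv:
  assumes adm: "\<And>k. k \<ge> 1 \<Longrightarrow> admissible (a k, e k)"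
  shows "prodM a e k = (x11,x12,x21,x22) \<Longrightarrow> x21 > 0 \<and> x21 + x22 > 0 \<and> x11*x22 - x12*x21 \<noteq> 0"
proof (induction k arbitrary: x11 x12 x21 x22)
  case 0
  then show ?case by (simp add: Mmat_def)
next
  case (Suc k)
  obtain y11 y12 y21 y22 where P: "prodM a e k = (y11,y12,y21,y22)" by (cases "prodM a e k") auto
  note IH = Suc.IH[OF P]
  define A where "A = a (Suc k)"
  define E where "E = e (Suc k)"
  have dig: "(A = 1 \<and> E = 1) \<or> (A \<ge> 2 \<and> (E = 1 \<or> E = -1))"
    using adm[of "Suc k"] unfolding admissible_def A_def E_def by auto
  have eqs: "x11 = 2*(A*y11+y12) + E*y11" "x12 = -(A*y11+y12)" "x21 = 2*(A*y21+y22) + E*y21" "x22 = -(A*y21+y22)"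
    using Suc.prems P by (auto simp: Emat_def Jmat_def A_def E_def)
  have c1: "A*y21 + y22 > 0"
  proof -
    have "(A-1)*y21 \<ge> 0" using dig IH by auto
    moreover have "A*y21 + y22 = (A-1)*y21 + (y21+y22)" by (simp add: algebra_simps)
    ultimately show ?thesis using IH by linarith
  qed
  have c2: "(A+E)*y21 + y22 > 0"
  proof -
    have "(A+E-1)*y21 \<ge> 0" using dig IH by auto
    moreover have "(A+E)*y21 + y22 = (A+E-1)*y21 + (y21+y22)" by (simp add: algebra_simps)
    ultimately show ?thesis using IH by linarith
  qed
  have det: "x11*x22 - x12*x21 = -E*(y11*y22 - y12*y21)" unfolding eqs by (simp add: algebra_simps)
  have "E \<noteq> 0" using dig by auto
  then show ?case using c1 c2 det IH unfolding eqs by (auto simp: algebra_simps)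
qed

lemma pp_eq: "prodM a e k = (x11,x12,x21,x22) \<Longrightarrow> pp a e k = x11"
  by (cases k) (auto simp: pp_def Mmat_def)
lemma qq_eq: "prodM a e k = (x11,x12,x21,x22) \<Longrightarrow> qq a e k = x21"
  by (cases k) (auto simp: qq_def Mmat_def)
lemma pp''_eq: assumes that: "prodM a e k = (x11,x12,x21,x22)" shows "pp'' a e k = x11 + x12"
proof (cases k)
  case 0 then show ?thesis using that by (simp add: pp''_def Mmat_def)
next
  case (Suc m)
  obtain y11 y12 y21 y22 where P: "prodM a e m = (y11,y12,y21,y22)" by (cases "prodM a e m") auto
  show ?thesis using Suc P that by (auto simp: pp''_def Emat_def Jmat_def)
qed
lemma qq''_eq: assumes that: "prodM a e k = (x11,x12,x21,x22)" shows "qq'' a e k = x21 + x22"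
proof (cases k)
  case 0 then show ?thesis using that by (simp add: qq''_def Mmat_def)
next
  case (Suc m)
  obtain y11 y12 y21 y22 where P: "prodM a e m = (y11,y12,y21,y22)" by (cases "prodM a e m") auto
  show ?thesis using Suc P that by (auto simp: qq''_def Emat_def Jmat_def)
qed

theorem lemma3p6:
  fixes a e :: "nat \<Rightarrow> int" and n :: nat
  assumes "\<And>k. k \<ge> 1 \<Longrightarrow> admissible (a k, e k)"
    and "n \<ge> 1"
  defines "r \<equiv> of_int (pp a e n) / of_int (qq a e n) :: real"
    and "r' \<equiv> of_int (pp' a e n) / of_int (qq' a e n) :: real"
    and "r'' \<equiv> of_int (pp'' a e n) / of_int (qq'' a e n) :: real"
    and "s \<equiv> of_int (pp a e (n-1)) / of_int (qq a e (n-1)) :: real"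
    and "s'' \<equiv> of_int (pp'' a e (n-1)) / of_int (qq'' a e (n-1)) :: real"
  shows "between r r' r''
    \<and> \<not> between s r' r''
    \<and> r \<noteq> r' \<and> r \<noteq> r'' \<and> r' \<noteq> r''
    \<and> r \<in> halfopen s s'' \<and> r' \<in> halfopen s s'' \<and> r'' \<in> halfopen s s''"
proof -
  obtain m where n: "n = Suc m" using assms(2) by (cases n) auto
  obtain x11 x12 x21 x22 where P: "prodM a e m = (x11,x12,x21,x22)" by (cases "prodM a e m") auto
  note I = inv[OF assms(1) P]
  define A where "A = a n"
  define E where "E = e n"
  have dig: "(A = 1 \<and> E = 1) \<or> (A \<ge> 2 \<and> (E = 1 \<or> E = -1))"
    using assms(1)[of n] assms(2) unfolding admissible_def A_def E_def by auto
  have digr: "(real_of_int A = 1 \<and> real_of_int E = 1) \<or> (real_of_int A \<ge> 2 \<and> (real_of_int E = 1 \<or> real_of_int E = -1))"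
    using dig by auto
  have I': "real_of_int x21 > 0" "real_of_int x21 + real_of_int x22 > 0"
    "real_of_int x11 * real_of_int x22 - real_of_int x12 * real_of_int x21 \<noteq> 0"
    using I by (simp, linarith, metis of_int_eq_iff of_int_0 of_int_diff of_int_mult)
  have "r = ((2*A+E)*x11 + 2*x12)/((2*A+E)*x21+2*x22)"
    unfolding r_def pp_def qq_def n using P by (simp add: Emat_def Jmat_def A_def E_def n algebra_simps)
  moreover have "r' = (A*x11 + x12)/(A*x21 + x22)"
    unfolding r'_def pp'_def qq'_def n using P by (simp add: Emat_def Jmat_def A_def E_def n algebra_simps)
  moreover have "r'' = ((A+E)*x11+x12)/((A+E)*x21+x22)"
    unfolding r''_def pp''_def qq''_def n using P by (simp add: Emat_def A_def E_def n algebra_simps)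
  moreover have "s = x11/x21" unfolding s_def n using P pp_eq[OF P] qq_eq[OF P] by simp
  moreover have "s'' = (x11+x12)/(x21+x22)" unfolding s''_def n using P pp''_eq[OF P] qq''_eq[OF P] by simp
  ultimately show ?thesis using mob[OF I' digr] by simp
qed

end
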